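(* The following identities hold: \begin{align*}\sum_{k=1}^\infty\frac{77k^2-53k+10}{k(3k-1)(3k-2)(-2)^k\binom{4k}k}&=-3\log2, \\\sum_{k=1}^\infty\frac{415k^2-343k+62}{k(3k-1)(3k-2)(-8)^k\binom{4k}k}&=-3\log2, \\\sum_{k=1}^\infty\frac{187k^2-131k+22}{k(3k-1)(3k-2)(-24)^k\binom{4k}k}&=\log\frac23, \\\sum_{k=1}^\infty\frac{1261k^2-989k+170}{k(3k-1)(3k-2)(-192)^k\binom{4k}k}&=\log\frac34. \end{align*} *)

theory Defs
  imports "HOL-Analysis.Analysis"
begin

end

theory Submission
  imports Defs
begin


lemma beta_nat:
  "((\<lambda>t::real. t^m * (1-t)^j) has_integral (fact m * fact j / fact (m+j+1))) {0..1}"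
proof -
  have "((\<lambda>t::real. t powr (real (m+1) - 1) * (1-t) powr (real (j+1) - 1)) has_integral Beta (real (m+1)) (real (j+1))) {0..1}"
    by (rule has_integral_Beta_real) auto
  hence "((\<lambda>t::real. t powr (real (m+1) - 1) * (1-t) powr (real (j+1) - 1)) has_integral Beta (real (m+1)) (real (j+1))) {0<..<1}"
    by (simp add: has_integral_Icc_iff_Ioo)
  moreover have "Beta (real (m+1)) (real (j+1)) = fact m * fact j / fact (m+j+1)"
  proof -
    have "Gamma (real (m+1)) = fact m" "Gamma (real (j+1)) = fact j" "Gamma (real (m+1) + real (j+1)) = fact (m+j+1)"
      using Gamma_fact[where 'a=real, of m] Gamma_fact[where 'a=real, of j] Gamma_fact[where 'a=real, of "m+j+1"]
      by (simp_all add: add_ac)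
    thus ?thesis unfolding Beta_def by simp
  qed
  ultimately have "((\<lambda>t::real. t powr (real (m+1) - 1) * (1-t) powr (real (j+1) - 1)) has_integral (fact m * fact j / fact (m+j+1))) {0<..<1}"
    by simp
  hence "((\<lambda>t::real. t^m * (1-t)^j) has_integral (fact m * fact j / fact (m+j+1))) {0<..<1}"
    by (subst has_integral_cong[where g="\<lambda>t. t powr (real (m+1) - 1) * (1-t) powr (real (j+1) - 1)"]) (auto simp: powr_realpow)
  thus ?thesis by (simp add: has_integral_Icc_iff_Ioo)
qed

lemma poly_rearr: "x*(x*t*u^3)^n*(a*t*u^2+b*t^2*u+c*t^3) = (x::real)^(n+1)*(a*(t^(n+1)*u^(3*n+2)) + b*(t^(n+2)*u^(3*n+1)) + c*(t^(n+3)*u^(3*n)))"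
proof -
  have e: "(x*t*u^3)^n = x^n*t^n*u^(3*n)" by (simp add: power_mult_distrib power_mult)
  have f: "u^(3*n+2) = u^(3*n)*u^2" "u^(3*n+1) = u^(3*n)*u" "t^(n+1) = t^n*t" "t^(n+2) = t^n*t^2" "t^(n+3) = t^n*t^3" "x^(n+1) = x^n*x"
    by (simp_all only: power_add power_one_right)
  show ?thesis unfolding e f by algebra
qed

definition RR :: "real \<Rightarrow> real \<Rightarrow> real \<Rightarrow> real \<Rightarrow> real" where
  "RR a b c t = a*t*(1-t)^2 + b*t^2*(1-t) + c*t^3"

lemma fact_facts:
  "(fact (n+1)::real) = (real n+1) * fact n"
  "(fact (n+2)::real) = (real n+2)*(real n+1) * fact n"
  "(fact (n+3)::real) = (real n+3)*(real n+2)*(real n+1) * fact n"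
  "(fact (3*n+1)::real) = (3*real n+1) * fact (3*n)"
  "(fact (3*n+2)::real) = (3*real n+2)*(3*real n+1) * fact (3*n)"
  "(fact (3*n+3)::real) = (3*real n+3)*(3*real n+2)*(3*real n+1) * fact (3*n)"
  by (simp_all add: numeral_eq_Suc fact_Suc algebra_simps)

lemma alg:
  fixes r Fn F3 F4 S a b c :: real
  assumes "r \<ge> 0" "Fn > 0" "F3 > 0" "F4 > 0" "S \<noteq> 0"
  shows "(1/S) * (a * ((r+1)*Fn * ((3*r+2)*(3*r+1)*F3) / F4) + b * ((r+2)*(r+1)*Fn * ((3*r+1)*F3) / F4) + c * ((r+3)*(r+2)*(r+1)*Fn * F3 / F4))
 = ((a*(3*(r+1)-1)*(3*(r+1)-2) + b*((r+1)+1)*(3*(r+1)-2) + c*((r+1)+1)*((r+1)+2))/3) / ((r+1) * (3*(r+1)-1) * (3*(r+1)-2) * S * (F4 / ((r+1)*Fn * ((3*r+3)*(3*r+2)*(3*r+1)*F3))))"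
proof -
  have e: "3*(r+1)-1 = 3*r+2" "3*(r+1)-2 = 3*r+1" "(r+1)+1 = r+2" "(r+1)+2 = r+3" "3*r+3 = 3*(r+1)" by simp_all
  have nz: "r+1 \<noteq> 0" "3*r+1 \<noteq> 0" "3*r+2 \<noteq> 0" "Fn \<noteq> 0" "F3 \<noteq> 0" "F4 \<noteq> 0"
    using assms by auto
  show ?thesis unfolding e using nz assms(5) by (simp add: divide_simps) algebra
qed

lemma term_int:
  fixes s a b c :: real and P :: "nat \<Rightarrow> real"
  assumes s: "s \<noteq> 0"
  assumes hP: "3 * P (Suc n) = a*(3*real (Suc n)-1)*(3*real(Suc n)-2) + b*(real(Suc n)+1)*(3*real(Suc n)-2) + c*(real (Suc n)+1)*(real(Suc n)+2)"
  shows "((\<lambda>t. (-1/s)*((-1/s)*t*(1-t)^3)^n * RR a b c t) has_integral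
     (let k = Suc n in P k / (real k * (3 * real k - 1) * (3 * real k - 2) * (-s) ^ k * real ((4 * k) choose k)))) {0..1}"
proof -
  define x where "x = -1/s"
  have eqf: "(\<lambda>t. x*(x*t*(1-t)^3)^n * RR a b c t) = (\<lambda>t. x^(n+1) * (a * (t^(n+1)*(1-t)^(3*n+2)) + b*(t^(n+2)*(1-t)^(3*n+1)) + c*(t^(n+3)*(1-t)^(3*n))))"
    by (rule ext) (simp only: RR_def poly_rearr)
  have arith_eq: "n+1+(3*n+2)+1 = 4*n+4" "n+2+(3*n+1)+1 = 4*n+4" "n+3+(3*n)+1 = 4*n+4" by simp_all
  have i1: "((\<lambda>t::real. t^(n+1)*(1-t)^(3*n+2)) has_integral (fact (n+1) * fact (3*n+2) / fact (4*n+4))) {0..1}"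
    using beta_nat[of "n+1" "3*n+2"] by (simp only: arith_eq)
  have i2: "((\<lambda>t::real. t^(n+2)*(1-t)^(3*n+1)) has_integral (fact (n+2) * fact (3*n+1) / fact (4*n+4))) {0..1}"
    using beta_nat[of "n+2" "3*n+1"] by (simp only: arith_eq)
  have i3: "((\<lambda>t::real. t^(n+3)*(1-t)^(3*n)) has_integral (fact (n+3) * fact (3*n) / fact (4*n+4))) {0..1}"
    using beta_nat[of "n+3" "3*n"] by (simp only: arith_eq)
  have I: "((\<lambda>t. x*(x*t*(1-t)^3)^n * RR a b c t) has_integral
      x^(n+1) * (a * (fact (n+1) * fact (3*n+2) / fact (4*n+4)) + b * (fact (n+2) * fact (3*n+1) / fact (4*n+4)) + c * (fact (n+3) * fact (3*n) / fact (4*n+4)))) {0..1}"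
    unfolding eqf
    by (intro has_integral_mult_right has_integral_add i1 i2 i3)
  have bin: "real ((4 * Suc n) choose Suc n) = fact (4*n+4) / (fact (n+1) * fact (3*n+3))"
    by (subst binomial_fact) (auto simp: algebra_simps)
  have xp: "x^(n+1) = 1 / (-s)^(Suc n)"
  proof -
    have "x = 1/(-s)" unfolding x_def by simp
    thus ?thesis by (simp only: power_one_over Suc_eq_plus1)
  qed
  have F: "(fact n::real) > 0" "(fact (3*n)::real) > 0" "(fact (4*n+4)::real) > 0" by auto
  have sp: "(-s)^(n+1) \<noteq> 0" using s by simp
  have P: "P (Suc n) = (a*(3*real (Suc n)-1)*(3*real(Suc n)-2) + b*(real(Suc n)+1)*(3*real(Suc n)-2) + c*(real (Suc n)+1)*(real(Suc n)+2))/3"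
    using hP by simp
  have val: "x^(n+1) * (a * (fact (n+1) * fact (3*n+2) / fact (4*n+4)) + b * (fact (n+2) * fact (3*n+1) / fact (4*n+4)) + c * (fact (n+3) * fact (3*n) / fact (4*n+4)))
     = (let k = Suc n in P k / (real k * (3 * real k - 1) * (3 * real k - 2) * (-s) ^ k * real ((4 * k) choose k)))"
    unfolding Let_def bin xp P fact_facts of_nat_Suc[of n] add.commute[of 1 "real n"]
    using alg[of "real n" "fact n" "fact (3*n)" "fact (4*n+4)" "(-s)^(Suc n)" a b c] F sp by simp
  have I2: "((\<lambda>t. x*(x*t*(1-t)^3)^n * RR a b c t) has_integral
     (let k = Suc n in P k / (real k * (3 * real k - 1) * (3 * real k - 2) * (-s) ^ k * real ((4 * k) choose k)))) {0..1}"
    using I by (simp only: val)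
  thus ?thesis unfolding x_def .
qed

lemma series_int:
  fixes s a b c L :: real and P :: "nat \<Rightarrow> real"
  assumes s: "s > 1"
  assumes hP: "\<And>n. 3 * P (Suc n) = a*(3*real (Suc n)-1)*(3*real(Suc n)-2) + b*(real(Suc n)+1)*(3*real(Suc n)-2) + c*(real (Suc n)+1)*(real(Suc n)+2)"
  assumes hL: "((\<lambda>t. (-1/s) * RR a b c t / (1 - (-1/s)*t*(1-t)^3)) has_integral L) {0..1}"
  shows "(\<lambda>n. let k = Suc n in P k / (real k * (3 * real k - 1) * (3 * real k - 2) * (-s) ^ k * real ((4 * k) choose k))) sums L"
proof -
  define x where "x = -1/s"
  define tm where "tm = (\<lambda>n. let k = Suc n in P k / (real k * (3 * real k - 1) * (3 * real k - 2) * (-s) ^ k * real ((4 * k) choose k)))"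
  define f where "f = (\<lambda>n t. x*(x*t*(1-t)^3)^n * RR a b c t)"
  define G where "G = (\<lambda>N t. \<Sum>n<N. f n t)"
  define g where "g = (\<lambda>t. x * RR a b c t / (1 - x*t*(1-t)^3))"
  have s0: "s \<noteq> 0" using s by auto
  have fi: "(f n has_integral tm n) {0..1}" for n
    unfolding f_def tm_def x_def by (rule term_int[where P=P, OF s0 hP[of n]])
  have Gi: "(G N has_integral (\<Sum>n<N. tm n)) {0..1}" for N
    unfolding G_def by (rule has_integral_sum) (auto intro: fi)
  have xb: "x \<le> 0" "-x \<le> 1" using s unfolding x_def by (auto simp: field_simps)
  have qb: "x*t*(1-t)^3 \<le> 0" "-(x*t*(1-t)^3) \<le> 1" if "t \<in> {0..1}" for t
  proof -
    have t: "0 \<le> t" "t \<le> 1" using that by auto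
    have p: "(1-t)^3 \<le> 1" "0 \<le> (1-t)^3" using t by (auto intro: power_le_one)
    have T: "0 \<le> t*(1-t)^3" "t*(1-t)^3 \<le> 1" using t p by (auto intro: mult_le_one)
    have "x*(t*(1-t)^3) \<le> 0" using xb(1) T(1) by (simp add: mult_nonpos_nonneg)
    moreover have "(-x)*(t*(1-t)^3) \<le> 1" using xb T by (rule_tac mult_le_one) auto
    ultimately show "x*t*(1-t)^3 \<le> 0" "-(x*t*(1-t)^3) \<le> 1" by (simp_all add: mult.assoc)
  qed
  have Geq: "G N t = x * RR a b c t * ((1 - (x*t*(1-t)^3)^N) / (1 - x*t*(1-t)^3))" if "t \<in> {0..1}" for N t
  proof -
    have "x*t*(1-t)^3 \<noteq> 1" using qb[OF that] by auto
    hence "(\<Sum>n<N. (x*t*(1-t)^3)^n) = (1 - (x*t*(1-t)^3)^N) / (1 - x*t*(1-t)^3)"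
      by (simp add: sum_gp_strict)
    moreover have "G N t = x * RR a b c t * (\<Sum>n<N. (x*t*(1-t)^3)^n)"
      unfolding G_def f_def by (simp add: sum_distrib_left mult_ac)
    ultimately show ?thesis by simp
  qed
  have hint: "(\<lambda>t. 2 * \<bar>x * RR a b c t\<bar>) integrable_on {0..1}"
    unfolding RR_def by (intro integrable_continuous_interval continuous_intros)
  have bound: "norm (G N t) \<le> 2 * \<bar>x * RR a b c t\<bar>" if "t \<in> {0..1}" for N t
  proof -
    define q where "q = x*t*(1-t)^3"
    have q: "q \<le> 0" "-q \<le> 1" using qb[OF that] unfolding q_def by auto
    have "\<bar>q^N\<bar> \<le> 1" unfolding power_abs using q by (intro power_le_one) auto
    hence "\<bar>1 - q^N\<bar> \<le> 2" by linarith
    moreover have "1 - q \<ge> 1" using q by simp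
    moreover have "\<bar>1 - q^N\<bar> \<le> \<bar>1 - q^N\<bar> * (1 - q)"
      using mult_left_mono[of 1 "1-q" "\<bar>1-q^N\<bar>"] q by simp
    ultimately have "\<bar>(1 - q^N) / (1 - q)\<bar> \<le> 2"
      by (simp add: abs_divide pos_divide_le_eq)
    hence "\<bar>x * RR a b c t\<bar> * \<bar>(1 - q^N) / (1 - q)\<bar> \<le> \<bar>x * RR a b c t\<bar> * 2"
      by (intro mult_left_mono) auto
    thus ?thesis using Geq[OF that, of N] unfolding q_def[symmetric] by (simp add: abs_mult mult_ac)
  qed
  have conv: "(\<lambda>N. G N t) \<longlonglongrightarrow> g t" if "t \<in> {0..1}" for t
  proof -
    define q where "q = x*t*(1-t)^3"
    have q: "q \<le> 0" "-q \<le> 1" using qb[OF that] unfolding q_def by auto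
    have "-q \<le> -x" unfolding q_def using that xb(1)
      by (auto intro!: mult_left_mono_neg[of "t*(1-t)^3" 1 x, simplified mult.assoc[symmetric], simplified]
            mult_le_one power_le_one)
    moreover have "-x < 1" using s unfolding x_def by (simp add: field_simps)
    ultimately have "norm q < 1" using q by auto
    hence "(\<lambda>n. (x * RR a b c t) * q^n) sums ((x * RR a b c t) * (1 / (1 - q)))"
      by (intro sums_mult geometric_sums)
    hence "(\<lambda>N. \<Sum>n<N. (x * RR a b c t) * q^n) \<longlonglongrightarrow> (x * RR a b c t) * (1 / (1 - q))"
      unfolding sums_def .
    moreover have "G N t = (\<Sum>n<N. (x * RR a b c t) * q^n)" for N
      unfolding G_def f_def q_def by (simp add: mult_ac)
    moreover have "(x * RR a b c t) * (1 / (1 - q)) = g t" unfolding g_def q_def by simp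
    ultimately show ?thesis by simp
  qed
  have "(\<lambda>N. integral {0..1} (G N)) \<longlonglongrightarrow> integral {0..1} g"
    by (rule dominated_convergence(2)[OF _ hint bound conv]) (use Gi in blast)+
  moreover have "integral {0..1} (G N) = (\<Sum>n<N. tm n)" for N using Gi by (rule integral_unique)
  moreover have "integral {0..1} g = L" using hL unfolding g_def x_def by (rule integral_unique)
  ultimately have "(\<lambda>N. \<Sum>n<N. tm n) \<longlonglongrightarrow> L" by simp
  thus ?thesis unfolding sums_def tm_def .
qed

lemma ftc_gen:
  fixes A B A' B' h :: "real \<Rightarrow> real" and al be :: real
  assumes pos: "\<And>t. t \<in> {0..1} \<Longrightarrow> A t > 0 \<and> B t > 0"
  and dA: "\<And>t. (A has_real_derivative A' t) (at t)"
  and dB: "\<And>t. (B has_real_derivative B' t) (at t)"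
  and h: "\<And>t. t \<in> {0..1} \<Longrightarrow> h t = al * A' t / A t + be * B' t / B t"
  shows "(h has_integral ((al * ln (A 1) + be * ln (B 1)) - (al * ln (A 0) + be * ln (B 0)))) {0..1}"
proof -
  have "((\<lambda>t. al * ln (A t) + be * ln (B t)) has_vector_derivative h t) (at t within {0..1})" if "t \<in> {0..1}" for t
  proof -
    have "((\<lambda>t. al * ln (A t) + be * ln (B t)) has_real_derivative (al * (A' t / A t) + be * (B' t / B t))) (at t)"
      using pos[OF that] dA[of t] dB[of t] by (auto intro!: derivative_eq_intros simp: field_simps)
    hence "((\<lambda>t. al * ln (A t) + be * ln (B t)) has_real_derivative h t) (at t)"
      using h[OF that] by simp
    thus ?thesis by (simp add: has_real_derivative_iff_has_vector_derivative has_vector_derivative_at_within)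
  qed
  thus ?thesis by (intro fundamental_theorem_of_calculus[where f="\<lambda>t. al * ln (A t) + be * ln (B t)", simplified]) auto
qed

lemma unit_facts: "t \<in> {0..1::real} \<Longrightarrow> 0 \<le> t \<and> t \<le> 1 \<and> t^3 \<le> t^2 \<and> t^2 \<le> t \<and> 0 \<le> t^2 \<and> 0 \<le> t^3"
proof -
  assume "t \<in> {0..1::real}"
  hence t: "0 \<le> t" "t \<le> 1" by auto
  have "t^2 \<le> t" using mult_left_mono[OF t(2) t(1)] by (simp add: power2_eq_square)
  moreover have "t^3 \<le> t^2" using mult_left_mono[OF t(2), of "t^2"] by (simp add: power3_eq_cube power2_eq_square)
  ultimately show ?thesis using t by simp
qed

lemma case0:
  "((\<lambda>n. let k = Suc n in
            (77 * real k ^ 2 - 53 * real k + 10) /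
            (real k * (3 * real k - 1) * (3 * real k - 2) * (-2) ^ k * real ((4 * k) choose k)))
          sums (-3 * ln 2))"
proof (rule series_int[where s=2 and a=21 and b=12 and c=6])
  show "(1::real) < 2" by simp
  show "3 * (77 * real (Suc n) ^ 2 - 53 * real (Suc n) + 10) = 21*(3*real (Suc n)-1)*(3*real(Suc n)-2) + 12*(real(Suc n)+1)*(3*real(Suc n)-2) + 6*(real (Suc n)+1)*(real(Suc n)+2)" for n
    by (simp add: algebra_simps power2_eq_square)
  have I: "((\<lambda>t. (-1/2) * RR 21 12 6 t / (1 - (-1/2)*t*(1-t)^3)) has_integral
     ((6 * ln ((\<lambda>t. 2-t) 1) + 3 * ln ((\<lambda>t. t^3-t^2+t+1) 1)) - (6 * ln ((\<lambda>t. 2-t) 0) + 3 * ln ((\<lambda>t. t^3-t^2+t+1) 0)))) {0..1}"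
  proof (rule ftc_gen)
    show "((\<lambda>t. 2-t) has_real_derivative -1) (at t)" for t
      by (auto intro!: derivative_eq_intros)
    show "((\<lambda>t. t^3-t^2+t+1) has_real_derivative 3*t^2-2*t+1) (at t)" for t
      by (auto intro!: derivative_eq_intros simp: algebra_simps)
    fix t :: real
    assume t: "t \<in> {0..1}"
    note u = unit_facts[OF t]
    show A: "2-t > 0 \<and> t^3-t^2+t+1 > 0" using u by linarith
    have D: "2 + t*(1-t)^3 = (2-t) * (t^3-t^2+t+1)" by (simp add: algebra_simps power2_eq_square power3_eq_cube)
    have N: "- RR 21 12 6 t = 6 * (-1) * (t^3-t^2+t+1) + 3 * (3*t^2-2*t+1) * (2-t)"
      by (simp add: RR_def algebra_simps power2_eq_square power3_eq_cube)
    have "(-1/2) * RR 21 12 6 t / (1 - (-1/2)*t*(1-t)^3) = - RR 21 12 6 t / (2 + t*(1-t)^3)"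
      by (simp add: field_simps)
    also have "... = (6 * (-1) * (t^3-t^2+t+1) + 3 * (3*t^2-2*t+1) * (2-t)) / ((2-t) * (t^3-t^2+t+1))" unfolding D N ..
    also have "... = 6 * (-1) / (2-t) + 3 * (3*t^2-2*t+1) / (t^3-t^2+t+1)"
      using A by (simp add: field_simps)
    finally show "(-1/2) * RR 21 12 6 t / (1 - (-1/2)*t*(1-t)^3) = 6 * (-1) / (2-t) + 3 * (3*t^2-2*t+1) / (t^3-t^2+t+1)" .
  qed
  have l4: "ln (4::real) = 2 * ln 2" using ln_realpow[of 2 2] by simp
  have l8: "ln (8::real) = 3 * ln 2" using ln_realpow[of 2 3] by simp
  have l64: "ln (64::real) = 6 * ln 2" using ln_realpow[of 2 6] by simp
  have l12: "ln (12::real) = 2 * ln 2 + ln 3" using ln_mult[of 4 3] l4 by simp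
  have l48: "ln (48::real) = 4 * ln 2 + ln 3" using ln_mult[of 16 3] ln_realpow[of 2 4] by simp
  have ld: "ln (2/3::real) = ln 2 - ln 3" "ln (3/4::real) = ln 3 - 2 * ln 2" using ln_div[of 2 3] ln_div[of 3 4] l4 by simp_all
  show "((\<lambda>t. (-1/2) * RR 21 12 6 t / (1 - (-1/2)*t*(1-t)^3)) has_integral (-3 * ln 2)) {0..1}"
    using I by (simp add: l4 l8 l64 l12 l48 ld)
qed

lemma case1:
  "((\<lambda>n. let k = Suc n in
            (415 * real k ^ 2 - 343 * real k + 62) /
            (real k * (3 * real k - 1) * (3 * real k - 2) * (-8) ^ k * real ((4 * k) choose k)))
          sums (-3 * ln 2))"
proof (rule series_int[where s=8 and a=123 and b=42 and c=12])
  show "(1::real) < 8" by simp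
  show "3 * (415 * real (Suc n) ^ 2 - 343 * real (Suc n) + 62) = 123*(3*real (Suc n)-1)*(3*real(Suc n)-2) + 42*(real(Suc n)+1)*(3*real(Suc n)-2) + 12*(real (Suc n)+1)*(real(Suc n)+2)" for n
    by (simp add: algebra_simps power2_eq_square)
  have I: "((\<lambda>t. (-1/8) * RR 123 42 12 t / (1 - (-1/8)*t*(1-t)^3)) has_integral
     ((21 * ln ((\<lambda>t. t+1) 1) + 24 * ln ((\<lambda>t. 8-7*t+4*t^2-t^3) 1)) - (21 * ln ((\<lambda>t. t+1) 0) + 24 * ln ((\<lambda>t. 8-7*t+4*t^2-t^3) 0)))) {0..1}"
  proof (rule ftc_gen)
    show "((\<lambda>t. t+1) has_real_derivative 1) (at t)" for t
      by (auto intro!: derivative_eq_intros)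
    show "((\<lambda>t. 8-7*t+4*t^2-t^3) has_real_derivative -7+8*t-3*t^2) (at t)" for t
      by (auto intro!: derivative_eq_intros simp: algebra_simps)
    fix t :: real
    assume t: "t \<in> {0..1}"
    note u = unit_facts[OF t]
    show A: "t+1 > 0 \<and> 8-7*t+4*t^2-t^3 > 0" using u by linarith
    have D: "8 + t*(1-t)^3 = (t+1) * (8-7*t+4*t^2-t^3)" by (simp add: algebra_simps power2_eq_square power3_eq_cube)
    have N: "- RR 123 42 12 t = 21 * (1) * (8-7*t+4*t^2-t^3) + 24 * (-7+8*t-3*t^2) * (t+1)"
      by (simp add: RR_def algebra_simps power2_eq_square power3_eq_cube)
    have "(-1/8) * RR 123 42 12 t / (1 - (-1/8)*t*(1-t)^3) = - RR 123 42 12 t / (8 + t*(1-t)^3)"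
      by (simp add: field_simps)
    also have "... = (21 * (1) * (8-7*t+4*t^2-t^3) + 24 * (-7+8*t-3*t^2) * (t+1)) / ((t+1) * (8-7*t+4*t^2-t^3))" unfolding D N ..
    also have "... = 21 * (1) / (t+1) + 24 * (-7+8*t-3*t^2) / (8-7*t+4*t^2-t^3)"
      using A by (simp add: field_simps)
    finally show "(-1/8) * RR 123 42 12 t / (1 - (-1/8)*t*(1-t)^3) = 21 * (1) / (t+1) + 24 * (-7+8*t-3*t^2) / (8-7*t+4*t^2-t^3)" .
  qed
  have l4: "ln (4::real) = 2 * ln 2" using ln_realpow[of 2 2] by simp
  have l8: "ln (8::real) = 3 * ln 2" using ln_realpow[of 2 3] by simp
  have l64: "ln (64::real) = 6 * ln 2" using ln_realpow[of 2 6] by simp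
  have l12: "ln (12::real) = 2 * ln 2 + ln 3" using ln_mult[of 4 3] l4 by simp
  have l48: "ln (48::real) = 4 * ln 2 + ln 3" using ln_mult[of 16 3] ln_realpow[of 2 4] by simp
  have ld: "ln (2/3::real) = ln 2 - ln 3" "ln (3/4::real) = ln 3 - 2 * ln 2" using ln_div[of 2 3] ln_div[of 3 4] l4 by simp_all
  show "((\<lambda>t. (-1/8) * RR 123 42 12 t / (1 - (-1/8)*t*(1-t)^3)) has_integral (-3 * ln 2)) {0..1}"
    using I by (simp add: l4 l8 l64 l12 l48 ld)
qed

lemma case2:
  "((\<lambda>n. let k = Suc n in
            (187 * real k ^ 2 - 131 * real k + 22) /
            (real k * (3 * real k - 1) * (3 * real k - 2) * (-24) ^ k * real ((4 * k) choose k)))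
          sums (ln (2/3)))"
proof (rule series_int[where s=24 and a=51 and b=30 and c=12])
  show "(1::real) < 24" by simp
  show "3 * (187 * real (Suc n) ^ 2 - 131 * real (Suc n) + 22) = 51*(3*real (Suc n)-1)*(3*real(Suc n)-2) + 30*(real(Suc n)+1)*(3*real(Suc n)-2) + 12*(real (Suc n)+1)*(real(Suc n)+2)" for n
    by (simp add: algebra_simps power2_eq_square)
  have I: "((\<lambda>t. (-1/24) * RR 51 30 12 t / (1 - (-1/24)*t*(1-t)^3)) has_integral
     ((9 * ln ((\<lambda>t. 3-t) 1) + 8 * ln ((\<lambda>t. t^3+3*t+8) 1)) - (9 * ln ((\<lambda>t. 3-t) 0) + 8 * ln ((\<lambda>t. t^3+3*t+8) 0)))) {0..1}"
  proof (rule ftc_gen)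
    show "((\<lambda>t. 3-t) has_real_derivative -1) (at t)" for t
      by (auto intro!: derivative_eq_intros)
    show "((\<lambda>t. t^3+3*t+8) has_real_derivative 3*t^2+3) (at t)" for t
      by (auto intro!: derivative_eq_intros simp: algebra_simps)
    fix t :: real
    assume t: "t \<in> {0..1}"
    note u = unit_facts[OF t]
    show A: "3-t > 0 \<and> t^3+3*t+8 > 0" using u by linarith
    have D: "24 + t*(1-t)^3 = (3-t) * (t^3+3*t+8)" by (simp add: algebra_simps power2_eq_square power3_eq_cube)
    have N: "- RR 51 30 12 t = 9 * (-1) * (t^3+3*t+8) + 8 * (3*t^2+3) * (3-t)"
      by (simp add: RR_def algebra_simps power2_eq_square power3_eq_cube)
    have "(-1/24) * RR 51 30 12 t / (1 - (-1/24)*t*(1-t)^3) = - RR 51 30 12 t / (24 + t*(1-t)^3)"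
      by (simp add: field_simps)
    also have "... = (9 * (-1) * (t^3+3*t+8) + 8 * (3*t^2+3) * (3-t)) / ((3-t) * (t^3+3*t+8))" unfolding D N ..
    also have "... = 9 * (-1) / (3-t) + 8 * (3*t^2+3) / (t^3+3*t+8)"
      using A by (simp add: field_simps)
    finally show "(-1/24) * RR 51 30 12 t / (1 - (-1/24)*t*(1-t)^3) = 9 * (-1) / (3-t) + 8 * (3*t^2+3) / (t^3+3*t+8)" .
  qed
  have l4: "ln (4::real) = 2 * ln 2" using ln_realpow[of 2 2] by simp
  have l8: "ln (8::real) = 3 * ln 2" using ln_realpow[of 2 3] by simp
  have l64: "ln (64::real) = 6 * ln 2" using ln_realpow[of 2 6] by simp
  have l12: "ln (12::real) = 2 * ln 2 + ln 3" using ln_mult[of 4 3] l4 by simp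
  have l48: "ln (48::real) = 4 * ln 2 + ln 3" using ln_mult[of 16 3] ln_realpow[of 2 4] by simp
  have ld: "ln (2/3::real) = ln 2 - ln 3" "ln (3/4::real) = ln 3 - 2 * ln 2" using ln_div[of 2 3] ln_div[of 3 4] l4 by simp_all
  show "((\<lambda>t. (-1/24) * RR 51 30 12 t / (1 - (-1/24)*t*(1-t)^3)) has_integral (ln (2/3))) {0..1}"
    using I by (simp add: l4 l8 l64 l12 l48 ld)
qed

lemma case3:
  "((\<lambda>n. let k = Suc n in
            (1261 * real k ^ 2 - 989 * real k + 170) /
            (real k * (3 * real k - 1) * (3 * real k - 2) * (-192) ^ k * real ((4 * k) choose k)))
          sums (ln (3/4)))"
proof (rule series_int[where s=192 and a=363 and b=156 and c=48])
  show "(1::real) < 192" by simp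
  show "3 * (1261 * real (Suc n) ^ 2 - 989 * real (Suc n) + 170) = 363*(3*real (Suc n)-1)*(3*real(Suc n)-2) + 156*(real(Suc n)+1)*(3*real(Suc n)-2) + 48*(real (Suc n)+1)*(real(Suc n)+2)" for n
    by (simp add: algebra_simps power2_eq_square)
  have I: "((\<lambda>t. (-1/192) * RR 363 156 48 t / (1 - (-1/192)*t*(1-t)^3)) has_integral
     ((63 * ln ((\<lambda>t. t+3) 1) + 64 * ln ((\<lambda>t. 64-21*t+6*t^2-t^3) 1)) - (63 * ln ((\<lambda>t. t+3) 0) + 64 * ln ((\<lambda>t. 64-21*t+6*t^2-t^3) 0)))) {0..1}"
  proof (rule ftc_gen)
    show "((\<lambda>t. t+3) has_real_derivative 1) (at t)" for t
      by (auto intro!: derivative_eq_intros)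
    show "((\<lambda>t. 64-21*t+6*t^2-t^3) has_real_derivative -21+12*t-3*t^2) (at t)" for t
      by (auto intro!: derivative_eq_intros simp: algebra_simps)
    fix t :: real
    assume t: "t \<in> {0..1}"
    note u = unit_facts[OF t]
    show A: "t+3 > 0 \<and> 64-21*t+6*t^2-t^3 > 0" using u by linarith
    have D: "192 + t*(1-t)^3 = (t+3) * (64-21*t+6*t^2-t^3)" by (simp add: algebra_simps power2_eq_square power3_eq_cube)
    have N: "- RR 363 156 48 t = 63 * (1) * (64-21*t+6*t^2-t^3) + 64 * (-21+12*t-3*t^2) * (t+3)"
      by (simp add: RR_def algebra_simps power2_eq_square power3_eq_cube)
    have "(-1/192) * RR 363 156 48 t / (1 - (-1/192)*t*(1-t)^3) = - RR 363 156 48 t / (192 + t*(1-t)^3)"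
      by (simp add: field_simps)
    also have "... = (63 * (1) * (64-21*t+6*t^2-t^3) + 64 * (-21+12*t-3*t^2) * (t+3)) / ((t+3) * (64-21*t+6*t^2-t^3))" unfolding D N ..
    also have "... = 63 * (1) / (t+3) + 64 * (-21+12*t-3*t^2) / (64-21*t+6*t^2-t^3)"
      using A by (simp add: field_simps)
    finally show "(-1/192) * RR 363 156 48 t / (1 - (-1/192)*t*(1-t)^3) = 63 * (1) / (t+3) + 64 * (-21+12*t-3*t^2) / (64-21*t+6*t^2-t^3)" .
  qed
  have l4: "ln (4::real) = 2 * ln 2" using ln_realpow[of 2 2] by simp
  have l8: "ln (8::real) = 3 * ln 2" using ln_realpow[of 2 3] by simp
  have l64: "ln (64::real) = 6 * ln 2" using ln_realpow[of 2 6] by simp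
  have l12: "ln (12::real) = 2 * ln 2 + ln 3" using ln_mult[of 4 3] l4 by simp
  have l48: "ln (48::real) = 4 * ln 2 + ln 3" using ln_mult[of 16 3] ln_realpow[of 2 4] by simp
  have ld: "ln (2/3::real) = ln 2 - ln 3" "ln (3/4::real) = ln 3 - 2 * ln 2" using ln_div[of 2 3] ln_div[of 3 4] l4 by simp_all
  show "((\<lambda>t. (-1/192) * RR 363 156 48 t / (1 - (-1/192)*t*(1-t)^3)) has_integral (ln (3/4))) {0..1}"
    using I by (simp add: l4 l8 l64 l12 l48 ld)
qed


theorem theorem1p2:
  shows "((\<lambda>n. let k = Suc n in
            (77 * real k ^ 2 - 53 * real k + 10) /
            (real k * (3 * real k - 1) * (3 * real k - 2) * (-2) ^ k * real ((4 * k) choose k)))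
          sums (- 3 * ln 2)) \<and>
        ((\<lambda>n. let k = Suc n in
            (415 * real k ^ 2 - 343 * real k + 62) /
            (real k * (3 * real k - 1) * (3 * real k - 2) * (-8) ^ k * real ((4 * k) choose k)))
          sums (- 3 * ln 2)) \<and>
        ((\<lambda>n. let k = Suc n in
            (187 * real k ^ 2 - 131 * real k + 22) /
            (real k * (3 * real k - 1) * (3 * real k - 2) * (-24) ^ k * real ((4 * k) choose k)))
          sums (ln (2 / 3))) \<and>
        ((\<lambda>n. let k = Suc n in
            (1261 * real k ^ 2 - 989 * real k + 170) /
            (real k * (3 * real k - 1) * (3 * real k - 2) * (-192) ^ k * real ((4 * k) choose k)))
          sums (ln (3 / 4)))"
    using case0 case1 case2 case3 by blast

end
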